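(* Let $n\ge2$, let $w = l_1\cdots l_k$ be a word in $\mathbb{F}_n^+$ of length $k\ge2$, let $0\le\delta<1$, and let $z_1,\dots,z_{k+1}\in\delta{\mathbb{B}}_n$, $z_i = (z_{i1},\dots,z_{in})$. Let $\rho_{Z,w}$ be the completely contractive representation of ${\mathfrak{A}}_n\times_\phi{\mathbb{Z}}^+$ into $(k+1)\times(k+1)$ matrices determined by $\rho_{Z,w}(U)=0$ and \[ \rho_{Z,w}(S_j) = \operatorname{diag}(z_{ij})_{i=1}^{k+1} + (1-\delta)\sum_{i:\, l_i = j} E_{i,i+1},\qquad 1\le j\le n. \] Then $\rho_{Z,w}(S_w)_{1,k+1} = (1-\delta)^k$ and $\rho_{Z,w}(S_v)_{1,k+1} = 0$ for all other words $v$ with $|v|\le k$. For each word $v$ with $|v|>k$ there is an analytic function $F_v$ on $(\delta{\mathbb{B}}_n)^{k+1}$ with $F_v(0)=0$ such that $\rho_{Z,w}(S_v)_{1,k+1} = F_v(z_1,\dots,z_{k+1})$ for all such choices of $z_1,\dots,z_{k+1}$. Moreover, if the coordinates $\{z_{ij}: 1\le i\le k+1,\ 1\le j\le n\}$ are all distinct, then the range of $\rho_{Z,w}$ is all of ${\mathfrak{T}}_{k+1}$, so that $\rho_{Z,w}\in{\mathcal{N}}_{Z,k+1}$.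
   Context: ${\mathfrak{A}}_n$ is the non-commutative disc algebra generated by the left creation operators $S_1,\dots,S_n$ on full Fock space; for a word $v = j_1\cdots j_m\in\mathbb{F}_n^+$ (free semigroup on $n$ letters) $S_v = S_{j_1}\cdots S_{j_m}$. $\phi$ is an isometric automorphism of ${\mathfrak{A}}_n$ and ${\mathfrak{A}}_n\times_\phi{\mathbb{Z}}^+$ is the universal operator algebra generated by ${\mathfrak{A}}_n$ and a contraction $U$ with $AU=U\phi(A)$; since the row $[\rho_{Z,w}(S_1)\ \cdots\ \rho_{Z,w}(S_n)]$ has norm $<1$, the formulas determine a completely contractive representation. $E_{i,i+1}$ are matrix units and ${\mathfrak{T}}_{k+1}$ is the algebra of upper triangular $(k+1)\times(k+1)$ matrices. For $z\in{\mathbb{B}}_n$, $\theta_{z,0}$ is the character of ${\mathfrak{A}}_n\times_\phi{\mathbb{Z}}^+$ with $\theta_{z,0}(S_i) = z_i$ and $\theta_{z,0}(U)=0$. A nest representation of size $m$ is a representation onto ${\mathfrak{T}}_m$, with diagonal characters $\theta_{\pi,i}(A)=\langle\pi(A)\xi_i,\xi_i\rangle$; for $Z=(z_1,z_2,\dots)$, ${\mathcal{N}}_{Z,m}$ is the set of $m\times m$ nest representations $\pi$ with $\theta_{\pi,i}=\theta_{z_i,0}$, $1\le i\le m$. *)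

theory Defs
  imports "HOL-Analysis.Analysis"
begin

text \<open>Matrices of size m are modelled as functions nat => nat => complex,
  only the entries with indices in {1..m} being relevant.
  Words in the free semigroup on n letters are lists over {1..n}.
  A tuple Z = (z_1,...,z_{k+1}) of points of C^n is a function z with
  z i j = z_{ij}.\<close>

type_synonym cmat = "nat \<Rightarrow> nat \<Rightarrow> complex"

definition mat_one :: cmat where
  "mat_one i j = (if i = j then 1 else 0)"

definition mat_mul :: "nat \<Rightarrow> cmat \<Rightarrow> cmat \<Rightarrow> cmat" where
  "mat_mul m A B i j = (\<Sum>l = 1..m. A i l * B l j)"

definition word_mat :: "nat \<Rightarrow> (nat \<Rightarrow> cmat) \<Rightarrow> nat list \<Rightarrow> cmat" where
  "word_mat m A v = foldr (\<lambda>j M. mat_mul m (A j) M) v mat_one"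

definition rho_S :: "real \<Rightarrow> (nat \<Rightarrow> nat \<Rightarrow> complex) \<Rightarrow> nat list \<Rightarrow> nat \<Rightarrow> cmat" where
  "rho_S \<delta> z w j r c =
     (if r = c then z r j else 0)
     + (if c = r + 1 \<and> 1 \<le> r \<and> r \<le> length w \<and> w ! (r - 1) = j
        then complex_of_real (1 - \<delta>) else 0)"

definition rho_word :: "real \<Rightarrow> (nat \<Rightarrow> nat \<Rightarrow> complex) \<Rightarrow> nat list \<Rightarrow> nat list \<Rightarrow> cmat" where
  "rho_word \<delta> z w v = word_mat (length w + 1) (rho_S \<delta> z w) v"

definition in_scaled_ball :: "real \<Rightarrow> nat \<Rightarrow> (nat \<Rightarrow> complex) \<Rightarrow> bool" where
  "in_scaled_ball \<delta> n x \<longleftrightarrow>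
     (\<exists>y. (\<Sum>j = 1..n. (cmod (y j))\<^sup>2) < 1 \<and> (\<forall>j \<in> {1..n}. x j = complex_of_real \<delta> * y j))"

definition scaled_polyball :: "real \<Rightarrow> nat \<Rightarrow> nat \<Rightarrow> (nat \<Rightarrow> nat \<Rightarrow> complex) set" where
  "scaled_polyball \<delta> n m = {z. \<forall>i \<in> {1..m}. in_scaled_ball \<delta> n (z i)}"

text \<open>Analyticity in the finitely many complex variables z_{ij}, (i,j) in I, on D:
  near every point a of D, F is the sum of an (unconditionally, i.e. absolutely)
  convergent power series in the variables (z_{ij} - a_{ij}), (i,j) in I.\<close>
definition analytic_several ::
  "(nat \<times> nat) set \<Rightarrow> (nat \<Rightarrow> nat \<Rightarrow> complex) set \<Rightarrow> ((nat \<Rightarrow> nat \<Rightarrow> complex) \<Rightarrow> complex) \<Rightarrow> bool" where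
  "analytic_several I D F \<longleftrightarrow>
     (\<forall>a \<in> D. \<exists>e > 0. \<exists>c :: ((nat \<times> nat) \<Rightarrow> nat) \<Rightarrow> complex.
        \<forall>z \<in> D. (\<forall>x \<in> I. cmod (z (fst x) (snd x) - a (fst x) (snd x)) < e) \<longrightarrow>
          ((\<lambda>\<alpha>. c \<alpha> * (\<Prod>x \<in> I. (z (fst x) (snd x) - a (fst x) (snd x)) ^ \<alpha> x))
             has_sum F z) {\<alpha>. \<forall>x. x \<notin> I \<longrightarrow> \<alpha> x = 0})"

definition upper_tri :: "nat \<Rightarrow> cmat \<Rightarrow> bool" where
  "upper_tri m M \<longleftrightarrow> (\<forall>i \<in> {1..m}. \<forall>j \<in> {1..m}. j < i \<longrightarrow> M i j = 0)"

text \<open>M (restricted to indices {1..m}) lies in the range of rho_{Z,w}: since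
  rho(U) = 0 and we are in finite dimensions, this range is the linear span of the
  rho(S_v), v ranging over all words (including the empty word, giving I).\<close>
definition in_rho_range :: "real \<Rightarrow> (nat \<Rightarrow> nat \<Rightarrow> complex) \<Rightarrow> nat \<Rightarrow> nat list \<Rightarrow> cmat \<Rightarrow> bool" where
  "in_rho_range \<delta> z n w M \<longleftrightarrow>
     (\<exists>V c. finite V \<and> (\<forall>v \<in> V. set v \<subseteq> {1..n}) \<and>
        (\<forall>i \<in> {1..length w + 1}. \<forall>j \<in> {1..length w + 1}.
           M i j = (\<Sum>v \<in> V. c v * rho_word \<delta> z w v i j)))"

end

theory Submission
  imports Defs
begin


abbreviation KK :: "real \<Rightarrow> complex" where "KK \<delta> \<equiv> complex_of_real (1 - \<delta>)"

lemma sum_two_row: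
  fixes x y :: complex
  assumes "finite A"
  shows "(\<Sum>l\<in>A. ((if r = l then x else 0) + (if l = Suc r \<and> P then y else 0)) * N l)
     = (if r \<in> A then x * N r else 0) + (if Suc r \<in> A \<and> P then y * N (Suc r) else 0)"
proof -
  have "(\<Sum>l\<in>A. ((if r = l then x else 0) + (if l = Suc r \<and> P then y else 0)) * N l)
     = (\<Sum>l\<in>A. (if l = r then x * N l else 0)) + (\<Sum>l\<in>A. (if l = Suc r then (if P then y * N l else 0) else 0))"
    unfolding sum.distrib[symmetric] by (intro sum.cong) (auto simp: distrib_right)
  also have "\<dots> = (if r \<in> A then x * N r else 0) + (if Suc r \<in> A \<and> P then y * N (Suc r) else 0)"
    using assms by (simp add: sum.delta)
  finally show ?thesis .
qed

lemma sum_two_col: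
  fixes x y :: complex
  assumes "finite A"
  shows "(\<Sum>l\<in>A. N l * ((if l = b then x else 0) + (if b = Suc l \<and> P l then y else 0)))
     = (if b \<in> A then N b * x else 0) + (if 1 \<le> b \<and> b - 1 \<in> A \<and> P (b - 1) then N (b - 1) * y else 0)"
proof -
  have "(\<Sum>l\<in>A. N l * ((if l = b then x else 0) + (if b = Suc l \<and> P l then y else 0)))
     = (\<Sum>l\<in>A. (if l = b then N l * x else 0)) + (\<Sum>l\<in>A. (if l = b - 1 then (if 1 \<le> b \<and> P l then N l * y else 0) else 0))"
    unfolding sum.distrib[symmetric] by (intro sum.cong) (auto simp: distrib_left)
  also have "\<dots> = (if b \<in> A then N b * x else 0) + (if 1 \<le> b \<and> b - 1 \<in> A \<and> P (b - 1) then N (b - 1) * y else 0)"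
    using assms by (simp add: sum.delta)
  finally show ?thesis .
qed

lemma mm_row:
  assumes "1 \<le> r" "r \<le> Suc (length w)"
  shows "mat_mul (Suc (length w)) (rho_S \<delta> z w j) N r b =
    z r j * N r b + (if r \<le> length w \<and> w ! (r - 1) = j then KK \<delta> * N (Suc r) b else 0)"
proof -
  have "mat_mul (Suc (length w)) (rho_S \<delta> z w j) N r b =
    (\<Sum>l\<in>{1..Suc (length w)}. ((if r = l then z r j else 0) + (if l = Suc r \<and> (1 \<le> r \<and> r \<le> length w \<and> w ! (r - 1) = j) then KK \<delta> else 0)) * N l b)"
    unfolding mat_mul_def rho_S_def by (intro sum.cong) auto
  also have "\<dots> = z r j * N r b + (if r \<le> length w \<and> w ! (r - 1) = j then KK \<delta> * N (Suc r) b else 0)"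
    by (subst sum_two_row) (use assms in auto)
  finally show ?thesis .
qed

lemma mm_col:
  assumes "1 \<le> b" "b \<le> Suc (length w)"
  shows "mat_mul (Suc (length w)) N (rho_S \<delta> z w j) a b =
    N a b * z b j + (if 2 \<le> b \<and> b - 1 \<le> length w \<and> w ! (b - 2) = j then N a (b - 1) * KK \<delta> else 0)"
proof -
  have "mat_mul (Suc (length w)) N (rho_S \<delta> z w j) a b =
    (\<Sum>l\<in>{1..Suc (length w)}. N a l * ((if l = b then z b j else 0) + (if b = Suc l \<and> (1 \<le> l \<and> l \<le> length w \<and> w ! (l - 1) = j) then KK \<delta> else 0)))"
    unfolding mat_mul_def rho_S_def by (intro sum.cong) auto
  also have "\<dots> = N a b * z b j + (if 2 \<le> b \<and> b - 1 \<le> length w \<and> w ! (b - 2) = j then N a (b - 1) * KK \<delta> else 0)"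
    by (subst sum_two_col[where P="\<lambda>l. 1 \<le> l \<and> l \<le> length w \<and> w ! (l - 1) = j"])
       (use assms in \<open>auto simp: numeral_2_eq_2\<close>)
  finally show ?thesis .
qed

lemma rw_cons: "rho_word \<delta> z w (j # v) = mat_mul (Suc (length w)) (rho_S \<delta> z w j) (rho_word \<delta> z w v)"
  by (simp add: rho_word_def word_mat_def)

lemma rw_nil: "rho_word \<delta> z w [] = mat_one"
  by (simp add: rho_word_def word_mat_def)

lemma rw_lower: "1 \<le> r \<Longrightarrow> r \<le> Suc (length w) \<Longrightarrow> c < r \<Longrightarrow> rho_word \<delta> z w v r c = 0"
proof (induction v arbitrary: r)
  case Nil then show ?case by (simp add: rw_nil mat_one_def)
next
  case (Cons j v) then show ?case by (simp add: rw_cons mm_row)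
qed

lemma rw_far: "1 \<le> r \<Longrightarrow> r \<le> Suc (length w) \<Longrightarrow> r + length v < c \<Longrightarrow> rho_word \<delta> z w v r c = 0"
proof (induction v arbitrary: r)
  case Nil then show ?case by (simp add: rw_nil mat_one_def)
next
  case (Cons j v) then show ?case by (simp add: rw_cons mm_row)
qed

lemma rw_zero: "1 \<le> r \<Longrightarrow> r \<le> Suc (length w) \<Longrightarrow> c \<noteq> r + length v \<Longrightarrow> rho_word \<delta> (\<lambda>_ _. 0) w v r c = 0"
proof (induction v arbitrary: r)
  case Nil then show ?case by (simp add: rw_nil mat_one_def)
next
  case (Cons j v) then show ?case by (simp add: rw_cons mm_row)
qed

lemma rw_diag: "1 \<le> r \<Longrightarrow> r + length v \<le> length w + 1 \<Longrightarrow>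
   rho_word \<delta> z w v r (r + length v) =
     (if (\<forall>i<length v. w ! (r - 1 + i) = v ! i) then KK \<delta> ^ length v else 0)"
proof (induction v arbitrary: r)
  case Nil then show ?case by (simp add: rw_nil mat_one_def)
next
  case (Cons j v)
  have far: "rho_word \<delta> z w v r (r + length (j # v)) = 0"
    using Cons.prems by (intro rw_far) auto
  have ih: "rho_word \<delta> z w v (Suc r) (Suc r + length v) =
     (if (\<forall>i<length v. w ! (Suc r - 1 + i) = v ! i) then KK \<delta> ^ length v else 0)"
    using Cons.prems by (intro Cons.IH) auto
  have eq: "(\<forall>i<length (j#v). w ! (r - 1 + i) = (j#v) ! i) \<longleftrightarrow>
      w ! (r - 1) = j \<and> (\<forall>i<length v. w ! (Suc r - 1 + i) = v ! i)"
    using Cons.prems by (simp add: All_less_Suc2)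
  have row: "rho_word \<delta> z w (j # v) r (r + length (j # v)) =
     z r j * rho_word \<delta> z w v r (r + length (j # v)) +
     (if r \<le> length w \<and> w ! (r - 1) = j then KK \<delta> * rho_word \<delta> z w v (Suc r) (Suc r + length v) else 0)"
    unfolding rw_cons using Cons.prems by (subst mm_row) auto
  show ?case unfolding row far ih eq using Cons.prems by auto
qed

lemma sum_swap_mul: "(\<Sum>l\<in>L. a l * (\<Sum>v\<in>V. c v * b v l)) = (\<Sum>v\<in>V. (c v :: complex) * (\<Sum>l\<in>L. a l * b v l))"
  by (simp add: sum_distrib_left sum.swap[of _ L] mult.left_commute)

lemma sum_swap_mul2: "(\<Sum>l\<in>L. (\<Sum>v\<in>V. c v * b v l) * a l) = (\<Sum>v\<in>V. (c v :: complex) * (\<Sum>l\<in>L. b v l * a l))"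
  by (simp add: sum_distrib_left sum_distrib_right sum.swap[of _ L] mult.assoc)

lemma mat_mul_assoc: "mat_mul m (mat_mul m A B) C i j = mat_mul m A (mat_mul m B C) i j"
  unfolding mat_mul_def
  apply (simp add: sum_distrib_left sum_distrib_right mult.assoc)
  apply (rule sum.swap)
  done

lemma mat_mul_one_left: "1 \<le> i \<Longrightarrow> i \<le> m \<Longrightarrow> mat_mul m mat_one B i j = (B i j :: complex)"
proof -
  assume "1 \<le> i" "i \<le> m"
  have "mat_mul m mat_one B i j = (\<Sum>l\<in>{1..m}. if i = l then B l j else 0)"
    unfolding mat_mul_def mat_one_def by (intro sum.cong) auto
  then show ?thesis using \<open>1 \<le> i\<close> \<open>i \<le> m\<close> by (simp add: sum.delta)
qed

lemma mat_mul_one_right: "1 \<le> j \<Longrightarrow> j \<le> m \<Longrightarrow> mat_mul m A mat_one i j = (A i j :: complex)"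
proof -
  assume "1 \<le> j" "j \<le> m"
  have "mat_mul m A mat_one i j = (\<Sum>l\<in>{1..m}. if l = j then A i l else 0)"
    unfolding mat_mul_def mat_one_def by (intro sum.cong) auto
  then show ?thesis using \<open>1 \<le> j\<close> \<open>j \<le> m\<close> by (simp add: sum.delta')
qed

lemma mat_mul_cong_right: "(\<And>l. l \<in> {1..m} \<Longrightarrow> B l j = B' l j) \<Longrightarrow> mat_mul m A B i j = mat_mul m A B' i j"
  unfolding mat_mul_def by (intro sum.cong) auto

lemma mat_mul_cong_left: "(\<And>l. l \<in> {1..m} \<Longrightarrow> A i l = A' i l) \<Longrightarrow> mat_mul m A B i j = mat_mul m A' B i j"
  unfolding mat_mul_def by (intro sum.cong) auto

lemma word_mat_append: "i \<in> {1..m} \<Longrightarrow> word_mat m (A :: nat \<Rightarrow> cmat) (u @ v) i j = mat_mul m (word_mat m A u) (word_mat m A v) i j"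
proof (induction u arbitrary: i)
  case Nil then show ?case by (simp add: word_mat_def mat_mul_one_left)
next
  case (Cons a u)
  have "word_mat m A ((a # u) @ v) i j = mat_mul m (A a) (word_mat m A (u @ v)) i j"
    by (simp add: word_mat_def)
  also have "\<dots> = mat_mul m (A a) (mat_mul m (word_mat m A u) (word_mat m A v)) i j"
    by (intro mat_mul_cong_right Cons.IH)
  also have "\<dots> = mat_mul m (word_mat m A (a # u)) (word_mat m A v) i j"
    by (simp add: word_mat_def mat_mul_assoc)
  finally show ?case .
qed

lemma rw_snoc:
  assumes "i \<in> {1..Suc (length w)}" "b \<in> {1..Suc (length w)}"
  shows "rho_word \<delta> z w (v @ [j]) i b = mat_mul (Suc (length w)) (rho_word \<delta> z w v) (rho_S \<delta> z w j) i b"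
proof -
  have "rho_word \<delta> z w (v @ [j]) i b = mat_mul (Suc (length w)) (rho_word \<delta> z w v) (rho_word \<delta> z w [j]) i b"
    unfolding rho_word_def using assms by (simp add: word_mat_append)
  also have "\<dots> = mat_mul (Suc (length w)) (rho_word \<delta> z w v) (rho_S \<delta> z w j) i b"
    by (intro mat_mul_cong_right) (use assms in \<open>auto simp: rho_word_def word_mat_def mat_mul_one_right\<close>)
  finally show ?thesis .
qed

lemma rr_cong: "in_rho_range \<delta> z n w M \<Longrightarrow> (\<And>i j. i \<in> {1..Suc (length w)} \<Longrightarrow> j \<in> {1..Suc (length w)} \<Longrightarrow> M i j = N i j)
  \<Longrightarrow> in_rho_range \<delta> z n w N"
  unfolding in_rho_range_def by (metis Suc_eq_plus1)

lemma rr_zero: "in_rho_range \<delta> z n w (\<lambda>_ _. 0)"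
  unfolding in_rho_range_def by (rule exI[of _ "{}"]) auto

lemma rr_word: "set v \<subseteq> {1..n} \<Longrightarrow> in_rho_range \<delta> z n w (rho_word \<delta> z w v)"
  unfolding in_rho_range_def by (rule exI[of _ "{v}"], rule exI[of _ "\<lambda>_. 1"]) auto

lemma rr_smult: "in_rho_range \<delta> z n w M \<Longrightarrow> in_rho_range \<delta> z n w (\<lambda>i j. a * M i j)"
  unfolding in_rho_range_def
  apply (elim exE conjE)
  subgoal for V c by (rule exI[of _ V], rule exI[of _ "\<lambda>v. a * c v"]) (auto simp: sum_distrib_left mult.assoc)
  done

lemma rr_add: "in_rho_range \<delta> z n w M \<Longrightarrow> in_rho_range \<delta> z n w N \<Longrightarrow> in_rho_range \<delta> z n w (\<lambda>i j. M i j + N i j)"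
  unfolding in_rho_range_def
proof (elim exE conjE)
  fix V1 c1 V2 c2
  assume f1: "finite V1" and s1: "\<forall>v\<in>V1. set v \<subseteq> {1..n}"
    and e1: "\<forall>i\<in>{1..length w + 1}. \<forall>j\<in>{1..length w + 1}. M i j = (\<Sum>v\<in>V1. c1 v * rho_word \<delta> z w v i j)"
    and f2: "finite V2" and s2: "\<forall>v\<in>V2. set v \<subseteq> {1..n}"
    and e2: "\<forall>i\<in>{1..length w + 1}. \<forall>j\<in>{1..length w + 1}. N i j = (\<Sum>v\<in>V2. c2 v * rho_word \<delta> z w v i j)"
  let ?c = "\<lambda>v. (if v \<in> V1 then c1 v else 0) + (if v \<in> V2 then c2 v else 0)"
  have "M i j + N i j = (\<Sum>v\<in>V1 \<union> V2. ?c v * rho_word \<delta> z w v i j)"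
    if "i \<in> {1..length w + 1}" "j \<in> {1..length w + 1}" for i j
  proof -
    have "(\<Sum>v\<in>V1 \<union> V2. ?c v * rho_word \<delta> z w v i j)
      = (\<Sum>v\<in>V1 \<union> V2. if v \<in> V1 then c1 v * rho_word \<delta> z w v i j else 0)
       + (\<Sum>v\<in>V1 \<union> V2. if v \<in> V2 then c2 v * rho_word \<delta> z w v i j else 0)"
      unfolding sum.distrib[symmetric] by (intro sum.cong) (auto simp: distrib_right)
    also have "\<dots> = (\<Sum>v\<in>V1. c1 v * rho_word \<delta> z w v i j) + (\<Sum>v\<in>V2. c2 v * rho_word \<delta> z w v i j)"
      using f1 f2 by (simp add: sum.inter_restrict[symmetric] Int_absorb1 Int_absorb2)
    finally show ?thesis using e1 e2 that by simp
  qed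
  then show "\<exists>V c. finite V \<and> (\<forall>v\<in>V. set v \<subseteq> {1..n}) \<and>
      (\<forall>i\<in>{1..length w + 1}. \<forall>j\<in>{1..length w + 1}. M i j + N i j = (\<Sum>v\<in>V. c v * rho_word \<delta> z w v i j))"
    using f1 f2 s1 s2 by (intro exI[of _ "V1 \<union> V2"] exI[of _ ?c]) auto
qed

lemma rr_sum: "finite A \<Longrightarrow> (\<And>x. x \<in> A \<Longrightarrow> in_rho_range \<delta> z n w (f x)) \<Longrightarrow> in_rho_range \<delta> z n w (\<lambda>i j. \<Sum>x\<in>A. f x i j)"
proof (induction A rule: finite_induct)
  case empty then show ?case using rr_zero by simp
next
  case (insert x F)
  have "in_rho_range \<delta> z n w (\<lambda>i j. f x i j + (\<Sum>x\<in>F. f x i j))"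
    using insert by (intro rr_add) auto
  then show ?case using insert by simp
qed

lemma rr_lmul:
  assumes "jj \<in> {1..n}" "in_rho_range \<delta> z n w M"
  shows "in_rho_range \<delta> z n w (mat_mul (Suc (length w)) (rho_S \<delta> z w jj) M)"
  using assms(2) unfolding in_rho_range_def
proof (elim exE conjE)
  fix V c
  assume f: "finite V" and s: "\<forall>v\<in>V. set v \<subseteq> {1..n}"
    and e: "\<forall>i\<in>{1..length w + 1}. \<forall>j\<in>{1..length w + 1}. M i j = (\<Sum>v\<in>V. c v * rho_word \<delta> z w v i j)"
  have "mat_mul (Suc (length w)) (rho_S \<delta> z w jj) M i j = (\<Sum>v\<in>Cons jj ` V. (c \<circ> tl) v * rho_word \<delta> z w v i j)"
    if "i \<in> {1..length w + 1}" "j \<in> {1..length w + 1}" for i j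
  proof -
    have "mat_mul (Suc (length w)) (rho_S \<delta> z w jj) M i j
      = (\<Sum>l = 1..Suc (length w). rho_S \<delta> z w jj i l * (\<Sum>v\<in>V. c v * rho_word \<delta> z w v l j))"
      unfolding mat_mul_def using e that by (intro sum.cong) auto
    also have "\<dots> = (\<Sum>v\<in>V. c v * rho_word \<delta> z w (jj # v) i j)"
      unfolding rw_cons mat_mul_def by (rule sum_swap_mul)
    also have "\<dots> = (\<Sum>v\<in>Cons jj ` V. (c \<circ> tl) v * rho_word \<delta> z w v i j)"
      by (subst sum.reindex) (auto simp: inj_on_def)
    finally show ?thesis .
  qed
  then show "\<exists>V c. finite V \<and> (\<forall>v\<in>V. set v \<subseteq> {1..n}) \<and>
      (\<forall>i\<in>{1..length w + 1}. \<forall>j\<in>{1..length w + 1}. mat_mul (Suc (length w)) (rho_S \<delta> z w jj) M i j = (\<Sum>v\<in>V. c v * rho_word \<delta> z w v i j))"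
    using f s assms(1) by (intro exI[of _ "Cons jj ` V"] exI[of _ "c \<circ> tl"]) auto
qed

lemma rr_rmul:
  assumes "jj \<in> {1..n}" "in_rho_range \<delta> z n w M"
  shows "in_rho_range \<delta> z n w (mat_mul (Suc (length w)) M (rho_S \<delta> z w jj))"
  using assms(2) unfolding in_rho_range_def
proof (elim exE conjE)
  fix V c
  assume f: "finite V" and s: "\<forall>v\<in>V. set v \<subseteq> {1..n}"
    and e: "\<forall>i\<in>{1..length w + 1}. \<forall>j\<in>{1..length w + 1}. M i j = (\<Sum>v\<in>V. c v * rho_word \<delta> z w v i j)"
  have "mat_mul (Suc (length w)) M (rho_S \<delta> z w jj) i j = (\<Sum>v\<in>(\<lambda>v. v @ [jj]) ` V. (c \<circ> butlast) v * rho_word \<delta> z w v i j)"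
    if "i \<in> {1..length w + 1}" "j \<in> {1..length w + 1}" for i j
  proof -
    have "mat_mul (Suc (length w)) M (rho_S \<delta> z w jj) i j
      = (\<Sum>l = 1..Suc (length w). (\<Sum>v\<in>V. c v * rho_word \<delta> z w v i l) * rho_S \<delta> z w jj l j)"
      unfolding mat_mul_def using e that by (intro sum.cong) auto
    also have "\<dots> = (\<Sum>v\<in>V. c v * mat_mul (Suc (length w)) (rho_word \<delta> z w v) (rho_S \<delta> z w jj) i j)"
      unfolding mat_mul_def by (rule sum_swap_mul2)
    also have "\<dots> = (\<Sum>v\<in>V. c v * rho_word \<delta> z w (v @ [jj]) i j)"
      using that by (intro sum.cong refl) (simp add: rw_snoc)
    also have "\<dots> = (\<Sum>v\<in>(\<lambda>v. v @ [jj]) ` V. (c \<circ> butlast) v * rho_word \<delta> z w v i j)"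
      by (subst sum.reindex) (auto simp: inj_on_def)
    finally show ?thesis .
  qed
  then show "\<exists>V c. finite V \<and> (\<forall>v\<in>V. set v \<subseteq> {1..n}) \<and>
      (\<forall>i\<in>{1..length w + 1}. \<forall>j\<in>{1..length w + 1}. mat_mul (Suc (length w)) M (rho_S \<delta> z w jj) i j = (\<Sum>v\<in>V. c v * rho_word \<delta> z w v i j))"
    using f s assms(1) by (intro exI[of _ "(\<lambda>v. v @ [jj]) ` V"] exI[of _ "c \<circ> butlast"]) auto
qed

lemma rr_upper: "in_rho_range \<delta> z n w M \<Longrightarrow> upper_tri (length w + 1) M"
  unfolding in_rho_range_def upper_tri_def
  by (auto intro!: sum.neutral simp: rw_lower)

definition LF :: "real \<Rightarrow> (nat \<Rightarrow> nat \<Rightarrow> complex) \<Rightarrow> nat list \<Rightarrow> nat \<Rightarrow> complex \<Rightarrow> cmat \<Rightarrow> cmat" where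
  "LF \<delta> z w j d M = (\<lambda>a b. mat_mul (Suc (length w)) (rho_S \<delta> z w j) M a b - d * M a b)"

definition RF :: "real \<Rightarrow> (nat \<Rightarrow> nat \<Rightarrow> complex) \<Rightarrow> nat list \<Rightarrow> nat \<Rightarrow> complex \<Rightarrow> cmat \<Rightarrow> cmat" where
  "RF \<delta> z w j d M = (\<lambda>a b. mat_mul (Suc (length w)) M (rho_S \<delta> z w j) a b - d * M a b)"

definition lapply where "lapply \<delta> z w j ls M = foldr (\<lambda>l N. LF \<delta> z w j (z l j) N) ls M"
definition rapply where "rapply \<delta> z w j ls M = foldr (\<lambda>l N. RF \<delta> z w j (z l j) N) ls M"

lemma lapply_Cons: "lapply \<delta> z w j (l # ls) M = LF \<delta> z w j (z l j) (lapply \<delta> z w j ls M)"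
  by (simp add: lapply_def)
lemma rapply_Cons: "rapply \<delta> z w j (l # ls) M = RF \<delta> z w j (z l j) (rapply \<delta> z w j ls M)"
  by (simp add: rapply_def)

lemma rr_lapply: "j \<in> {1..n} \<Longrightarrow> in_rho_range \<delta> z n w M \<Longrightarrow> in_rho_range \<delta> z n w (lapply \<delta> z w j ls M)"
proof (induction ls)
  case Nil then show ?case by (simp add: lapply_def)
next
  case (Cons l ls)
  let ?N = "lapply \<delta> z w j ls M"
  have "in_rho_range \<delta> z n w (\<lambda>a b. mat_mul (Suc (length w)) (rho_S \<delta> z w j) ?N a b + (- z l j) * ?N a b)"
    using Cons by (intro rr_add rr_lmul rr_smult) auto
  then show ?case by (simp add: lapply_Cons LF_def)
qed

lemma rr_rapply: "j \<in> {1..n} \<Longrightarrow> in_rho_range \<delta> z n w M \<Longrightarrow> in_rho_range \<delta> z n w (rapply \<delta> z w j ls M)"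
proof (induction ls)
  case Nil then show ?case by (simp add: rapply_def)
next
  case (Cons l ls)
  let ?N = "rapply \<delta> z w j ls M"
  have "in_rho_range \<delta> z n w (\<lambda>a b. mat_mul (Suc (length w)) ?N (rho_S \<delta> z w j) a b + (- z l j) * ?N a b)"
    using Cons by (intro rr_add rr_rmul rr_smult) auto
  then show ?case by (simp add: rapply_Cons RF_def)
qed

lemma lapply_rows_zero:
  assumes "1 \<le> t" "t \<le> Suc (Suc (length w))"
  shows "\<forall>a. t \<le> a \<and> a \<le> Suc (length w) \<longrightarrow> lapply \<delta> z w j [t..<Suc (Suc (length w))] M a b = 0"
  using assms(2,1)
proof (induction t rule: inc_induct)
  case base then show ?case by auto
next
  case (step t)
  let ?N = "lapply \<delta> z w j [Suc t..<Suc (Suc (length w))] M"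
  have ih: "\<And>a. Suc t \<le> a \<Longrightarrow> a \<le> Suc (length w) \<Longrightarrow> ?N a b = 0" using step by auto
  have eq: "[t..<Suc (Suc (length w))] = t # [Suc t..<Suc (Suc (length w))]"
    using step.hyps by (simp add: upt_conv_Cons)
  show ?case
  proof (intro allI impI)
    fix a assume a: "t \<le> a \<and> a \<le> Suc (length w)"
    have "lapply \<delta> z w j [t..<Suc (Suc (length w))] M a b =
       z a j * ?N a b + (if a \<le> length w \<and> w ! (a - 1) = j then KK \<delta> * ?N (Suc a) b else 0) - z t j * ?N a b"
      unfolding eq lapply_Cons LF_def using a step.prems by (subst mm_row) auto
    also have "\<dots> = 0"
    proof (cases "a = t")
      case True then show ?thesis using ih by auto
    next
      case False then show ?thesis using ih a by auto
    qed
    finally show "lapply \<delta> z w j [t..<Suc (Suc (length w))] M a b = 0" .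
  qed
qed

lemma lapply_row_eigen:
  assumes "1 \<le> r" "r \<le> Suc (length w)" "\<not> (r \<le> length w \<and> w ! (r - 1) = j)"
  shows "lapply \<delta> z w j ls M r b = (\<Prod>l\<leftarrow>ls. z r j - z l j) * M r b"
proof (induction ls)
  case Nil then show ?case by (simp add: lapply_def)
next
  case (Cons l ls)
  show ?case unfolding lapply_Cons LF_def using assms Cons
    by (subst mm_row) (auto simp: algebra_simps)
qed

lemma rapply_cols_zero:
  assumes "s \<le> Suc (length w)"
  shows "\<forall>b. 1 \<le> b \<and> b \<le> s \<longrightarrow> rapply \<delta> z w j (rev [1..<Suc s]) M a b = 0"
  using assms
proof (induction s)
  case 0 then show ?case by auto
next
  case (Suc s)
  let ?N = "rapply \<delta> z w j (rev [1..<Suc s]) M"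
  have ih: "\<And>b. 1 \<le> b \<Longrightarrow> b \<le> s \<Longrightarrow> ?N a b = 0" using Suc by auto
  have eq: "rev [1..<Suc (Suc s)] = Suc s # rev [1..<Suc s]" by simp
  show ?case
  proof (intro allI impI)
    fix b assume b: "1 \<le> b \<and> b \<le> Suc s"
    have "rapply \<delta> z w j (rev [1..<Suc (Suc s)]) M a b =
       ?N a b * z b j + (if 2 \<le> b \<and> b - 1 \<le> length w \<and> w ! (b - 2) = j then ?N a (b - 1) * KK \<delta> else 0) - z (Suc s) j * ?N a b"
      unfolding eq rapply_Cons RF_def using b Suc.prems by (subst mm_col) auto
    also have "\<dots> = 0"
    proof (cases "b = Suc s")
      case True then show ?thesis using ih by auto
    next
      case False then show ?thesis using ih b by auto
    qed
    finally show "rapply \<delta> z w j (rev [1..<Suc (Suc s)]) M a b = 0" .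
  qed
qed

lemma rapply_col_eigen:
  assumes "1 \<le> c" "c \<le> Suc (length w)" "\<not> (2 \<le> c \<and> c - 1 \<le> length w \<and> w ! (c - 2) = j)"
  shows "rapply \<delta> z w j ls M a c = (\<Prod>l\<leftarrow>ls. z c j - z l j) * M a c"
proof (induction ls)
  case Nil then show ?case by (simp add: rapply_def)
next
  case (Cons l ls)
  show ?case unfolding rapply_Cons RF_def using assms Cons
    by (subst mm_col) (auto simp: algebra_simps)
qed

lemma rapply_row_zero:
  assumes "\<And>b. M a b = 0"
  shows "rapply \<delta> z w j ls M a b = 0"
proof (induction ls arbitrary: b)
  case Nil then show ?case using assms by (simp add: rapply_def)
next
  case (Cons l ls)
  then show ?case unfolding rapply_Cons RF_def mat_mul_def by simp
qed

lemma prod_nz: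
  fixes z :: "nat \<Rightarrow> nat \<Rightarrow> complex"
  assumes "inj_on (\<lambda>(i, j). z i j) ({1..length w + 1} \<times> {1..n})"
    and "j \<in> {1..n}" "1 \<le> r" "r \<le> Suc (length w)"
    and "set ls \<subseteq> {1..Suc (length w)} - {r}"
  shows "(\<Prod>l\<leftarrow>ls. z r j - z l j) \<noteq> 0"
proof -
  have "z r j - z l j \<noteq> 0" if "l \<in> set ls" for l
  proof
    assume "z r j - z l j = 0"
    then have "z r j = z l j" by simp
    then have "(\<lambda>(i, j). z i j) (r, j) = (\<lambda>(i, j). z i j) (l, j)" by simp
    then have "(r, j) = (l, j)" using assms that by (intro inj_onD[OF assms(1)]) auto
    then show False using assms that by auto
  qed
  then show ?thesis by (auto simp: prod_list_zero_iff)
qed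

lemma construct:
  assumes n2: "2 \<le> n" and sw: "set w \<subseteq> {1..n}" and d1: "\<delta> < 1"
    and inj: "inj_on (\<lambda>(i, j). z i j) ({1..length w + 1} \<times> {1..n})"
    and rc: "1 \<le> r" "r \<le> c" "c \<le> Suc (length w)"
  shows "\<exists>X. in_rho_range \<delta> z n w X \<and> X r c \<noteq> 0 \<and>
     (\<forall>a b. a \<in> {1..Suc (length w)} \<longrightarrow> b \<in> {1..Suc (length w)} \<longrightarrow> X a b \<noteq> 0 \<longrightarrow> a \<le> r \<and> c \<le> b \<and> a \<le> b)"
proof -
  define m where "m = Suc (length w)"
  define u where "u = take (c - r) (drop (r - 1) w)"
  define j1 where "j1 = (if w ! (r - 1) = 1 then 2 else (1::nat))"
  define j2 where "j2 = (if w ! (c - 2) = 1 then 2 else (1::nat))"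
  have j1: "j1 \<in> {1..n}" "\<not> (r \<le> length w \<and> w ! (r - 1) = j1)" using n2 by (auto simp: j1_def)
  have j2: "j2 \<in> {1..n}" "\<not> (2 \<le> c \<and> c - 1 \<le> length w \<and> w ! (c - 2) = j2)" using n2 by (auto simp: j2_def)
  define Y where "Y = lapply \<delta> z w j1 [Suc r..<Suc m] (rho_word \<delta> z w u)"
  define X where "X = rapply \<delta> z w j2 (rev [1..<c]) Y"
  have su: "set u \<subseteq> {1..n}" using sw unfolding u_def by (meson order_trans set_drop_subset set_take_subset)
  have XB: "in_rho_range \<delta> z n w X"
    unfolding X_def Y_def using j1 j2 su by (intro rr_rapply rr_lapply rr_word) auto
  have lu: "length u = c - r" using rc by (simp add: u_def)
  have Yrc: "Y r c = (\<Prod>l\<leftarrow>[Suc r..<Suc m]. z r j1 - z l j1) * KK \<delta> ^ (c - r)"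
  proof -
    have "rho_word \<delta> z w u r (r + length u) = KK \<delta> ^ length u"
      using rc lu by (subst rw_diag) (auto simp: u_def)
    then show ?thesis unfolding Y_def using rc j1 lu by (subst lapply_row_eigen) (auto simp: m_def)
  qed
  have Xrc: "X r c = (\<Prod>l\<leftarrow>rev [1..<c]. z c j2 - z l j2) * Y r c"
    unfolding X_def using rc j2 by (intro rapply_col_eigen) auto
  have p1: "(\<Prod>l\<leftarrow>[Suc r..<Suc m]. z r j1 - z l j1) \<noteq> 0"
    by (rule prod_nz[OF inj j1(1)]) (use rc in \<open>auto simp: m_def\<close>)
  have p2: "(\<Prod>l\<leftarrow>rev [1..<c]. z c j2 - z l j2) \<noteq> 0"
    by (rule prod_nz[OF inj j2(1)]) (use rc in \<open>auto\<close>)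
  have K: "KK \<delta> \<noteq> 0" using d1 by simp
  have "X r c \<noteq> 0"
    unfolding Xrc Yrc using p1 p2 K by simp
  moreover have "X a b = 0" if ab: "a \<in> {1..Suc (length w)}" "b \<in> {1..Suc (length w)}" "\<not> (a \<le> r \<and> c \<le> b \<and> a \<le> b)" for a b
  proof -
    consider "r < a" | "b < c" | "b < a" using ab(3) by (meson not_le)
    then show ?thesis
    proof cases
      case 1
      have "\<And>b. Y a b = 0" unfolding Y_def m_def
        using lapply_rows_zero[where t="Suc r" and w=w and \<delta>=\<delta> and z=z and j=j1 and M="rho_word \<delta> z w u"] 1 that rc by auto
      then show ?thesis unfolding X_def by (rule rapply_row_zero)
    next
      case 2
      have "rev [1..<Suc (c - 1)] = rev [1..<c]" using rc by simp
      then show ?thesis unfolding X_def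
        using rapply_cols_zero[where s="c - 1" and w=w and \<delta>=\<delta> and z=z and j=j2 and M=Y and a=a] 2 that rc by auto
    next
      case 3
      then show ?thesis using rr_upper[OF XB] that unfolding upper_tri_def by auto
    qed
  qed
  ultimately show ?thesis using XB by blast
qed

definition Em :: "nat \<Rightarrow> nat \<Rightarrow> cmat" where "Em r c = (\<lambda>i j. if i = r \<and> j = c then 1 else 0)"

lemma sum_Em: "finite Q \<Longrightarrow> (\<Sum>p\<in>Q. f p * Em (fst p) (snd p) i j) = (if (i, j) \<in> Q then f (i, j) else 0)"
proof -
  assume fQ: "finite Q"
  have "(\<Sum>p\<in>Q. f p * Em (fst p) (snd p) i j) = (\<Sum>p\<in>Q. if p = (i, j) then f p else 0)"
    by (intro sum.cong) (auto simp: Em_def)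
  then show ?thesis using fQ by (simp add: sum.delta')
qed

lemma E_in:
  assumes n2: "2 \<le> n" and sw: "set w \<subseteq> {1..n}" and d1: "\<delta> < 1"
    and inj: "inj_on (\<lambda>(i, j). z i j) ({1..length w + 1} \<times> {1..n})"
  shows "1 \<le> r \<Longrightarrow> r \<le> c \<Longrightarrow> c \<le> Suc (length w) \<Longrightarrow> in_rho_range \<delta> z n w (Em r c)"
proof -
  define m where "m = Suc (length w)"
  have main: "\<forall>r c. m - (c - r) = d \<longrightarrow> 1 \<le> r \<longrightarrow> r \<le> c \<longrightarrow> c \<le> m \<longrightarrow> in_rho_range \<delta> z n w (Em r c)" for d
  proof (induction d rule: less_induct)
    case (less d)
    show ?case
    proof (intro allI impI)
      fix r c assume d: "m - (c - r) = d" and rc: "1 \<le> r" "r \<le> c" "c \<le> m"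
      obtain X where XB: "in_rho_range \<delta> z n w X" and Xrc: "X r c \<noteq> 0"
        and Xz: "\<forall>a b. a \<in> {1..m} \<longrightarrow> b \<in> {1..m} \<longrightarrow> X a b \<noteq> 0 \<longrightarrow> a \<le> r \<and> c \<le> b \<and> a \<le> b"
        using construct[OF n2 sw d1 inj rc(1,2)] rc(3) unfolding m_def by blast
      define Q where "Q = {p \<in> {1..m} \<times> {1..m}. fst p \<le> r \<and> c \<le> snd p \<and> fst p \<le> snd p \<and> p \<noteq> (r, c)}"
      have fQ: "finite Q" unfolding Q_def by (rule finite_subset[where B="{1..m} \<times> {1..m}"]) auto
      have IHQ: "in_rho_range \<delta> z n w (Em (fst p) (snd p))" if "p \<in> Q" for p
      proof -
        obtain a b where p: "p = (a, b)" by force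
        have ab: "a \<in> {1..m}" "b \<in> {1..m}" "a \<le> r" "c \<le> b" "a \<le> b" "(a, b) \<noteq> (r, c)"
          using that unfolding Q_def p by auto
        have lt: "m - (b - a) < d" using ab d rc by auto
        have "\<forall>r c. m - (c - r) = m - (b - a) \<longrightarrow> 1 \<le> r \<longrightarrow> r \<le> c \<longrightarrow> c \<le> m \<longrightarrow> in_rho_range \<delta> z n w (Em r c)"
          by (rule less.IH[OF lt])
        then have "in_rho_range \<delta> z n w (Em a b)" using ab by simp
        then show ?thesis using p by simp
      qed
      define Z where "Z = (\<lambda>i j. X i j + (-1) * (\<Sum>p\<in>Q. X (fst p) (snd p) * Em (fst p) (snd p) i j))"
      have ZB: "in_rho_range \<delta> z n w Z"
        unfolding Z_def
        by (intro rr_add XB rr_smult rr_sum[where f="\<lambda>p i j. X (fst p) (snd p) * Em (fst p) (snd p) i j"] fQ IHQ)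
      have "in_rho_range \<delta> z n w (\<lambda>i j. (1 / X r c) * Z i j)" by (rule rr_smult[OF ZB])
      then show "in_rho_range \<delta> z n w (Em r c)"
      proof (rule rr_cong)
        fix i j assume ij: "i \<in> {1..Suc (length w)}" "j \<in> {1..Suc (length w)}"
        have Zij: "Z i j = X i j - (if (i, j) \<in> Q then X i j else 0)"
          unfolding Z_def using fQ by (simp add: sum_Em[where f="\<lambda>p. X (fst p) (snd p)"])
        show "1 / X r c * Z i j = Em r c i j"
        proof (cases "(i, j) = (r, c)")
          case True
          then have "(i, j) \<notin> Q" unfolding Q_def by auto
          then show ?thesis using True Xrc Zij by (simp add: Em_def)
        next
          case False
          show ?thesis
          proof (cases "(i, j) \<in> Q")
            case True then show ?thesis using False Zij by (auto simp: Em_def)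
          next
            case nq: False
            have "\<not> (i \<le> r \<and> c \<le> j \<and> i \<le> j)" using nq False ij unfolding Q_def m_def by auto
            then have "X i j = 0" using Xz ij unfolding m_def by blast
            then show ?thesis using False Zij by (auto simp: Em_def)
          qed
        qed
      qed
    qed
  qed
  assume "1 \<le> r" "r \<le> c" "c \<le> Suc (length w)"
  then show ?thesis using main unfolding m_def by blast
qed

lemma upper_in:
  assumes n2: "2 \<le> n" and sw: "set w \<subseteq> {1..n}" and d1: "\<delta> < 1"
    and inj: "inj_on (\<lambda>(i, j). z i j) ({1..length w + 1} \<times> {1..n})"
    and up: "upper_tri (length w + 1) M"
  shows "in_rho_range \<delta> z n w M"
proof -
  define P where "P = {p \<in> {1..Suc (length w)} \<times> {1..Suc (length w)}. fst p \<le> snd p}"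
  have fP: "finite P" unfolding P_def by (rule finite_subset[where B="{1..Suc (length w)} \<times> {1..Suc (length w)}"]) auto
  have "in_rho_range \<delta> z n w (\<lambda>i j. \<Sum>p\<in>P. M (fst p) (snd p) * Em (fst p) (snd p) i j)"
    by (intro rr_sum[where f="\<lambda>p i j. M (fst p) (snd p) * Em (fst p) (snd p) i j"] fP rr_smult E_in[OF n2 sw d1 inj])
       (auto simp: P_def)
  then show ?thesis
  proof (rule rr_cong)
    fix i j assume ij: "i \<in> {1..Suc (length w)}" "j \<in> {1..Suc (length w)}"
    show "(\<Sum>p\<in>P. M (fst p) (snd p) * Em (fst p) (snd p) i j) = M i j"
      using fP ij up unfolding upper_tri_def
      by (subst sum_Em[where f="\<lambda>p. M (fst p) (snd p)"]) (auto simp: P_def)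
  qed
qed



definition mnm :: "(nat \<times> nat) set \<Rightarrow> (nat \<Rightarrow> nat \<Rightarrow> complex) \<Rightarrow> ((nat \<times> nat) \<Rightarrow> nat) \<Rightarrow> (nat \<Rightarrow> nat \<Rightarrow> complex) \<Rightarrow> complex" where
  "mnm I a \<alpha> z = (\<Prod>x\<in>I. (z (fst x) (snd x) - a (fst x) (snd x)) ^ \<alpha> x)"

definition polyrep where
  "polyrep I a F \<longleftrightarrow> (\<exists>S c. finite S \<and> (\<forall>\<alpha>\<in>S. \<forall>x. x \<notin> I \<longrightarrow> \<alpha> x = 0) \<and>
      (\<forall>z. F z = (\<Sum>\<alpha>\<in>S. c \<alpha> * mnm I a \<alpha> z)))"

lemma pr_const: "polyrep I a (\<lambda>z. k)"
  unfolding polyrep_def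
  by (rule exI[of _ "{\<lambda>_. 0}"], rule exI[of _ "\<lambda>_. k"]) (simp add: mnm_def)

lemma pr_smult: "polyrep I a F \<Longrightarrow> polyrep I a (\<lambda>z. k * F z)"
  unfolding polyrep_def
  apply (elim exE conjE)
  subgoal for S c by (rule exI[of _ S], rule exI[of _ "\<lambda>\<alpha>. k * c \<alpha>"]) (auto simp: sum_distrib_left mult.assoc)
  done

lemma pr_add: "polyrep I a F \<Longrightarrow> polyrep I a G \<Longrightarrow> polyrep I a (\<lambda>z. F z + G z)"
  unfolding polyrep_def
proof (elim exE conjE)
  fix S1 c1 S2 c2
  assume f1: "finite S1" and s1: "\<forall>\<alpha>\<in>S1. \<forall>x. x \<notin> I \<longrightarrow> \<alpha> x = 0" and e1: "\<forall>z. F z = (\<Sum>\<alpha>\<in>S1. c1 \<alpha> * mnm I a \<alpha> z)"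
    and f2: "finite S2" and s2: "\<forall>\<alpha>\<in>S2. \<forall>x. x \<notin> I \<longrightarrow> \<alpha> x = 0" and e2: "\<forall>z. G z = (\<Sum>\<alpha>\<in>S2. c2 \<alpha> * mnm I a \<alpha> z)"
  let ?c = "\<lambda>v. (if v \<in> S1 then c1 v else 0) + (if v \<in> S2 then c2 v else 0)"
  have "F z + G z = (\<Sum>\<alpha>\<in>S1 \<union> S2. ?c \<alpha> * mnm I a \<alpha> z)" for z
  proof -
    have "(\<Sum>\<alpha>\<in>S1 \<union> S2. ?c \<alpha> * mnm I a \<alpha> z)
      = (\<Sum>\<alpha>\<in>S1 \<union> S2. if \<alpha> \<in> S1 then c1 \<alpha> * mnm I a \<alpha> z else 0)
       + (\<Sum>\<alpha>\<in>S1 \<union> S2. if \<alpha> \<in> S2 then c2 \<alpha> * mnm I a \<alpha> z else 0)"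
      unfolding sum.distrib[symmetric] by (intro sum.cong) (auto simp: distrib_right)
    also have "\<dots> = (\<Sum>\<alpha>\<in>S1. c1 \<alpha> * mnm I a \<alpha> z) + (\<Sum>\<alpha>\<in>S2. c2 \<alpha> * mnm I a \<alpha> z)"
      using f1 f2 by (simp add: sum.inter_restrict[symmetric] Int_absorb1 Int_absorb2)
    finally show ?thesis using e1 e2 by simp
  qed
  then show "\<exists>S c. finite S \<and> (\<forall>\<alpha>\<in>S. \<forall>x. x \<notin> I \<longrightarrow> \<alpha> x = 0) \<and> (\<forall>z. F z + G z = (\<Sum>\<alpha>\<in>S. c \<alpha> * mnm I a \<alpha> z))"
    using f1 f2 s1 s2 by (intro exI[of _ "S1 \<union> S2"] exI[of _ ?c]) auto
qed

lemma mnm_shift: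
  assumes "finite I" "p \<in> I"
  shows "mnm I a (\<alpha>(p := Suc (\<alpha> p))) z = (z (fst p) (snd p) - a (fst p) (snd p)) * mnm I a \<alpha> z"
proof -
  let ?t = "\<lambda>x. z (fst x) (snd x) - a (fst x) (snd x)"
  have A: "mnm I a (\<alpha>(p := Suc (\<alpha> p))) z = ?t p ^ Suc (\<alpha> p) * (\<Prod>x\<in>I - {p}. ?t x ^ (\<alpha>(p := Suc (\<alpha> p))) x)"
    unfolding mnm_def using assms by (subst prod.remove[of I p]) auto
  have B: "(\<Prod>x\<in>I - {p}. ?t x ^ (\<alpha>(p := Suc (\<alpha> p))) x) = (\<Prod>x\<in>I - {p}. ?t x ^ \<alpha> x)"
    by (intro prod.cong) auto
  have C: "mnm I a \<alpha> z = ?t p ^ \<alpha> p * (\<Prod>x\<in>I - {p}. ?t x ^ \<alpha> x)"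
    unfolding mnm_def using assms by (subst prod.remove[of I p]) auto
  show ?thesis unfolding A B C by (simp only: power_Suc mult.assoc)
qed

lemma pr_var:
  assumes "finite I" "p \<in> I" "polyrep I a F"
  shows "polyrep I a (\<lambda>z. z (fst p) (snd p) * F z)"
proof -
  obtain S c where f: "finite S" and s: "\<forall>\<alpha>\<in>S. \<forall>x. x \<notin> I \<longrightarrow> \<alpha> x = 0"
    and e: "\<forall>z. F z = (\<Sum>\<alpha>\<in>S. c \<alpha> * mnm I a \<alpha> z)"
    using assms(3) unfolding polyrep_def by blast
  define sh where "sh = (\<lambda>\<alpha>::(nat\<times>nat) \<Rightarrow> nat. \<alpha>(p := Suc (\<alpha> p)))"
  define c' where "c' = (\<lambda>\<beta>::(nat\<times>nat) \<Rightarrow> nat. c (\<beta>(p := \<beta> p - 1)))"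
  have inj: "inj_on sh S"
  proof (rule inj_onI)
    fix x y assume "sh x = sh y"
    then have "\<And>q. sh x q = sh y q" by simp
    then show "x = y" unfolding sh_def by (metis fun_upd_apply nat.inject ext)
  qed
  have "polyrep I a (\<lambda>z. (z (fst p) (snd p) - a (fst p) (snd p)) * F z)"
    unfolding polyrep_def
  proof (intro exI[of _ "sh ` S"] exI[of _ c'] conjI allI ballI impI)
    show "finite (sh ` S)" using f by simp
  next
    fix \<beta> x assume b: "\<beta> \<in> sh ` S" and x: "x \<notin> I"
    then obtain \<alpha> where al: "\<alpha> \<in> S" "\<beta> = sh \<alpha>" by blast
    have "x \<noteq> p" using x assms(2) by blast
    then show "\<beta> x = 0" using s al x unfolding sh_def by (metis fun_upd_other)
  next
    fix z
    have "(z (fst p) (snd p) - a (fst p) (snd p)) * F z = (\<Sum>\<alpha>\<in>S. c \<alpha> * mnm I a (sh \<alpha>) z)"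
      unfolding sh_def using assms by (simp add: e sum_distrib_left mnm_shift mult.left_commute)
    also have "\<dots> = (\<Sum>\<alpha>\<in>S. c' (sh \<alpha>) * mnm I a (sh \<alpha>) z)"
      by (intro sum.cong) (auto simp: c'_def sh_def)
    also have "\<dots> = (\<Sum>\<beta>\<in>sh ` S. c' \<beta> * mnm I a \<beta> z)"
      using inj by (simp add: sum.reindex)
    finally show "(z (fst p) (snd p) - a (fst p) (snd p)) * F z = (\<Sum>\<beta>\<in>sh ` S. c' \<beta> * mnm I a \<beta> z)" .
  qed
  moreover have "polyrep I a (\<lambda>z. a (fst p) (snd p) * F z)" by (rule pr_smult[OF assms(3)])
  ultimately have "polyrep I a (\<lambda>z. (z (fst p) (snd p) - a (fst p) (snd p)) * F z + a (fst p) (snd p) * F z)"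
    by (rule pr_add)
  then show ?thesis by (simp add: algebra_simps)
qed

lemma pr_analytic:
  assumes "\<And>a. a \<in> D \<Longrightarrow> polyrep I a F"
  shows "analytic_several I D F"
  unfolding analytic_several_def
proof (intro ballI)
  fix a assume "a \<in> D"
  then have "polyrep I a F" by (rule assms)
  then obtain S c where f: "finite S" and s: "\<forall>\<alpha>\<in>S. \<forall>x. x \<notin> I \<longrightarrow> \<alpha> x = 0"
    and e: "\<forall>z. F z = (\<Sum>\<alpha>\<in>S. c \<alpha> * mnm I a \<alpha> z)"
    unfolding polyrep_def by blast
  define c' where "c' = (\<lambda>\<alpha>. if \<alpha> \<in> S then c \<alpha> else 0)"
  define T where "T = {\<alpha>. \<forall>x. x \<notin> I \<longrightarrow> \<alpha> x = (0::nat)}"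
  have hs: "((\<lambda>\<alpha>. c' \<alpha> * mnm I a \<alpha> z) has_sum F z) T" for z
  proof (rule has_sum_finite_neutralI)
    show "finite S" by (rule f)
    show "S \<subseteq> T" using s unfolding T_def by blast
    show "c' \<alpha> * mnm I a \<alpha> z = 0" if "\<alpha> \<in> T - S" for \<alpha>
      using that unfolding c'_def by simp
    have "(\<Sum>\<alpha>\<in>S. c' \<alpha> * mnm I a \<alpha> z) = (\<Sum>\<alpha>\<in>S. c \<alpha> * mnm I a \<alpha> z)"
      unfolding c'_def by (intro sum.cong) auto
    then show "F z = (\<Sum>\<alpha>\<in>S. c' \<alpha> * mnm I a \<alpha> z)" using e by simp
  qed
  show "\<exists>e>0. \<exists>c. \<forall>z\<in>D. (\<forall>x\<in>I. cmod (z (fst x) (snd x) - a (fst x) (snd x)) < e) \<longrightarrow>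
          ((\<lambda>\<alpha>. c \<alpha> * (\<Prod>x\<in>I. (z (fst x) (snd x) - a (fst x) (snd x)) ^ \<alpha> x)) has_sum F z) {\<alpha>. \<forall>x. x \<notin> I \<longrightarrow> \<alpha> x = 0}"
  proof (intro exI[of _ "1::real"] conjI exI[of _ c'] ballI impI)
    fix z show "((\<lambda>\<alpha>. c' \<alpha> * (\<Prod>x\<in>I. (z (fst x) (snd x) - a (fst x) (snd x)) ^ \<alpha> x)) has_sum F z) {\<alpha>. \<forall>x. x \<notin> I \<longrightarrow> \<alpha> x = 0}"
      using hs[of z] unfolding T_def mnm_def .
  qed simp
qed


lemma pr_rw:
  "set v \<subseteq> {1..n} \<Longrightarrow> 1 \<le> r \<Longrightarrow> r \<le> Suc (length w) \<Longrightarrow>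
   polyrep ({1..length w + 1} \<times> {1..n}) a (\<lambda>z. rho_word \<delta> z w v r c)"
proof (induction v arbitrary: r)
  case Nil then show ?case by (simp add: rw_nil pr_const)
next
  case (Cons j v)
  let ?I = "{1..length w + 1} \<times> {1..n}"
  have eq: "(\<lambda>z. rho_word \<delta> z w (j # v) r c) = (\<lambda>z. z r j * rho_word \<delta> z w v r c +
      (if r \<le> length w \<and> w ! (r - 1) = j then KK \<delta> * rho_word \<delta> z w v (Suc r) c else 0))"
    using Cons.prems by (intro ext) (simp add: rw_cons mm_row)
  have p1: "polyrep ?I a (\<lambda>z. z r j * rho_word \<delta> z w v r c)"
    using pr_var[of ?I "(r, j)" a "\<lambda>z. rho_word \<delta> z w v r c"] Cons by simp
  have p2: "polyrep ?I a (\<lambda>z. (if r \<le> length w \<and> w ! (r - 1) = j then KK \<delta> * rho_word \<delta> z w v (Suc r) c else 0))"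
  proof (cases "r \<le> length w \<and> w ! (r - 1) = j")
    case True
    then have "polyrep ?I a (\<lambda>z. KK \<delta> * rho_word \<delta> z w v (Suc r) c)"
      using Cons by (intro pr_smult Cons.IH) auto
    then show ?thesis using True by simp
  next
    case False
    then have "(\<lambda>z. (if r \<le> length w \<and> w ! (r - 1) = j then KK \<delta> * rho_word \<delta> z w v (Suc r) c else 0)) = (\<lambda>z. 0)"
      by (intro ext) auto
    then show ?thesis by (simp only: pr_const)
  qed
  show ?case unfolding eq by (rule pr_add[OF p1 p2])
qed

theorem lemma4p3:
  fixes n :: nat and w :: "nat list" and \<delta> :: real
  assumes "n \<ge> 2" and "length w \<ge> 2" and "set w \<subseteq> {1..n}"
    and "0 \<le> \<delta>" and "\<delta> < 1"
  shows
    "(\<forall>z \<in> scaled_polyball \<delta> n (length w + 1).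
        rho_word \<delta> z w w 1 (length w + 1) = complex_of_real ((1 - \<delta>) ^ length w)
      \<and> (\<forall>v. set v \<subseteq> {1..n} \<and> length v \<le> length w \<and> v \<noteq> w \<longrightarrow>
             rho_word \<delta> z w v 1 (length w + 1) = 0))
     \<and> (\<forall>v. set v \<subseteq> {1..n} \<and> length v > length w \<longrightarrow>
          (\<exists>F. analytic_several ({1..length w + 1} \<times> {1..n})
                  (scaled_polyball \<delta> n (length w + 1)) F
             \<and> F (\<lambda>_ _. 0) = 0
             \<and> (\<forall>z \<in> scaled_polyball \<delta> n (length w + 1).
                  rho_word \<delta> z w v 1 (length w + 1) = F z)))
     \<and> (\<forall>z \<in> scaled_polyball \<delta> n (length w + 1).
          inj_on (\<lambda>(i, j). z i j) ({1..length w + 1} \<times> {1..n}) \<longrightarrow>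
            (\<forall>M. in_rho_range \<delta> z n w M \<longleftrightarrow> upper_tri (length w + 1) M)
          \<and> (\<forall>i \<in> {1..length w + 1}. \<forall>j \<in> {1..n}. rho_S \<delta> z w j i i = z i j))"
proof -
  let ?m = "length w + 1"
  let ?D = "scaled_polyball \<delta> n ?m"
  have P1: "rho_word \<delta> z w w 1 (length w + 1) = complex_of_real ((1 - \<delta>) ^ length w)
      \<and> (\<forall>v. set v \<subseteq> {1..n} \<and> length v \<le> length w \<and> v \<noteq> w \<longrightarrow>
             rho_word \<delta> z w v 1 (length w + 1) = 0)" for z
  proof
    have "rho_word \<delta> z w w 1 (1 + length w) = KK \<delta> ^ length w"
      by (subst rw_diag) auto
    then show "rho_word \<delta> z w w 1 (length w + 1) = complex_of_real ((1 - \<delta>) ^ length w)"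
      by (simp add: of_real_power)
    show "\<forall>v. set v \<subseteq> {1..n} \<and> length v \<le> length w \<and> v \<noteq> w \<longrightarrow> rho_word \<delta> z w v 1 (length w + 1) = 0"
    proof (intro allI impI, elim conjE)
      fix v :: "nat list" assume lv: "length v \<le> length w" and vw: "v \<noteq> w"
      show "rho_word \<delta> z w v 1 (length w + 1) = 0"
      proof (cases "length v < length w")
        case True then show ?thesis by (intro rw_far) auto
      next
        case False
        then have le: "length v = length w" using lv by simp
        have "\<not> (\<forall>i<length v. w ! (1 - 1 + i) = v ! i)"
        proof
          assume "\<forall>i<length v. w ! (1 - 1 + i) = v ! i"
          then have "w = v" using le by (intro nth_equalityI) auto
          then show False using vw by simp
        qed
        moreover have "rho_word \<delta> z w v 1 (1 + length v) =
            (if (\<forall>i<length v. w ! (1 - 1 + i) = v ! i) then KK \<delta> ^ length v else 0)"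
          using le by (intro rw_diag) auto
        ultimately have "rho_word \<delta> z w v 1 (1 + length v) = 0" by (simp only: if_False)
        then show ?thesis using le by (simp add: add.commute)
      qed
    qed
  qed
  have P2: "\<exists>F. analytic_several ({1..length w + 1} \<times> {1..n}) ?D F \<and> F (\<lambda>_ _. 0) = 0
      \<and> (\<forall>z \<in> ?D. rho_word \<delta> z w v 1 (length w + 1) = F z)"
    if "set v \<subseteq> {1..n}" "length v > length w" for v
  proof (intro exI[of _ "\<lambda>z. rho_word \<delta> z w v 1 (length w + 1)"] conjI ballI refl)
    show "analytic_several ({1..length w + 1} \<times> {1..n}) ?D (\<lambda>z. rho_word \<delta> z w v 1 (length w + 1))"
      by (intro pr_analytic pr_rw that(1)) auto
    show "rho_word \<delta> (\<lambda>_ _. 0) w v 1 (length w + 1) = 0"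
      using that(2) by (intro rw_zero) auto
  qed
  have P3: "(\<forall>M. in_rho_range \<delta> z n w M \<longleftrightarrow> upper_tri (length w + 1) M)
          \<and> (\<forall>i \<in> {1..length w + 1}. \<forall>j \<in> {1..n}. rho_S \<delta> z w j i i = z i j)"
    if inj: "inj_on (\<lambda>(i, j). z i j) ({1..length w + 1} \<times> {1..n})" for z
  proof
    show "\<forall>M. in_rho_range \<delta> z n w M \<longleftrightarrow> upper_tri (length w + 1) M"
      using rr_upper upper_in[OF assms(1) assms(3) assms(5) inj] by blast
    show "\<forall>i \<in> {1..length w + 1}. \<forall>j \<in> {1..n}. rho_S \<delta> z w j i i = z i j"
      by (simp add: rho_S_def)
  qed
  show ?thesis using P1 P2 P3 by blast
qed

end
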